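(* Let $\mathfrak{A}$ be a complete atomic weakly associative relation algebra with universe $A$, and let $\mathfrak{B}=\langle B,T_\kappa,E_{\kappa\lambda}\rangle_{\kappa,\lambda<3}$ be its suitable structure. Then $\mathfrak{A}\cong\mathfrak{Ra}\,\mathfrak{Cm}\,\mathfrak{B}$, via the map $\varphi:A\to\mathcal{P}(B)$ defined by $\varphi(x)=\{t\in B: t_2\le x\}$.
   Context: WA: algebras $\langle A,+,\overline{\phantom{x}},;,\breve{\phantom{x}},1'\rangle$ with $x\cdot y=\overline{\overline{x}+\overline{y}}$, $0'=\overline{1'}$, $1=1'+0'$, $0=\overline{1}$, satisfying for all $x,y,z$: $x+y=y+x$; $x+(y+z)=(x+y)+z$; $\overline{\overline{x}+\overline{y}}+\overline{\overline{x}+y}=x$; $((x\cdot 1');1);1=(x\cdot1');1$; $(x+y);z=x;z+y;z$; $x;1'=x$; $\breve{\breve{x}}=x$; $\breve{(x+y)}=\breve{x}+\breve{y}$; $\breve{(x;y)}=\breve{y};\breve{x}$; $\breve{x};\overline{x;y}+\overline{y}=\overline{y}$. Complete/atomic refer to the Boolean reduct; $\mathrm{At}(\mathfrak{A})$ = atoms. Suitable structure: $B=\{s\in{}^3\mathrm{At}(\mathfrak{A}): s_2;s_0\ge s_1\}$; $T_\kappa=\{\langle s,t\rangle\in B\times B:s_\kappa=t_\kappa\}$; $E_{\kappa\kappa}=B$; for distinct $\kappa,\lambda$ with third index $\mu$, $E_{\kappa\lambda}=\{s\in B:s_\mu\le1'\}$. Complex algebra $\mathfrak{Cm}\,\mathfrak{B}=\langle\mathcal{P}(B),\cup,\cap,B\setminus\cdot,\emptyset,B,T_\kappa^*,E_{\kappa\lambda}\rangle_{\kappa,\lambda<3}$,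 with $T_\kappa^*(X)=\{y\in B:\exists x\in X\ \langle y,x\rangle\in T_\kappa\}$ as cylindrification $c_\kappa$ and $E_{\kappa\lambda}$ as diagonal $d_{\kappa\lambda}$. Relation-algebraic reduct: for an algebra $\mathfrak{C}=\langle C,+,\overline{\phantom{x}},c_\kappa,d_{\kappa\lambda}\rangle_{\kappa,\lambda<3}$, let $Nr_2\mathfrak{C}=\{x\in C:c_2x=x\}$, $x;y=c_2(c_1(d_{12}\cdot x)\cdot c_0(d_{02}\cdot y))$, $\breve{x}=c_2(d_{20}\cdot c_0(d_{01}\cdot c_1(d_{12}\cdot x)))$, and $\mathfrak{Ra}\,\mathfrak{C}=\langle Nr_2\mathfrak{C},+,\overline{\phantom{x}},;,\breve{\phantom{x}},d_{01}\rangle$. *)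

theory Defs
  imports Main
begin

text \<open>Signature of a (weakly associative) relation-type algebra, with universe the whole type 'a:
  join (+), Boolean complement, relative product (;), converse, identity element 1'.\<close>
record 'a ra_sig =
  join :: "'a \<Rightarrow> 'a \<Rightarrow> 'a"
  cpl  :: "'a \<Rightarrow> 'a"
  rcomp :: "'a \<Rightarrow> 'a \<Rightarrow> 'a"
  conv :: "'a \<Rightarrow> 'a"
  ident :: 'a

definition meet :: "'a ra_sig \<Rightarrow> 'a \<Rightarrow> 'a \<Rightarrow> 'a" where
  "meet A x y = cpl A (join A (cpl A x) (cpl A y))"

definition diversity :: "'a ra_sig \<Rightarrow> 'a" where
  "diversity A = cpl A (ident A)"

definition topel :: "'a ra_sig \<Rightarrow> 'a" where
  "topel A = join A (ident A) (diversity A)"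

definition botel :: "'a ra_sig \<Rightarrow> 'a" where
  "botel A = cpl A (topel A)"

definition leq :: "'a ra_sig \<Rightarrow> 'a \<Rightarrow> 'a \<Rightarrow> bool" where
  "leq A x y \<longleftrightarrow> join A x y = y"

definition WA :: "'a ra_sig \<Rightarrow> bool" where
  "WA A \<longleftrightarrow>
    (\<forall>x y. join A x y = join A y x) \<and>
    (\<forall>x y z. join A x (join A y z) = join A (join A x y) z) \<and>
    (\<forall>x y. join A (cpl A (join A (cpl A x) (cpl A y))) (cpl A (join A (cpl A x) y)) = x) \<and>
    (\<forall>x. rcomp A (rcomp A (meet A x (ident A)) (topel A)) (topel A)
          = rcomp A (meet A x (ident A)) (topel A)) \<and>
    (\<forall>x y z. rcomp A (join A x y) z = join A (rcomp A x z) (rcomp A y z)) \<and>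
    (\<forall>x. rcomp A x (ident A) = x) \<and>
    (\<forall>x. conv A (conv A x) = x) \<and>
    (\<forall>x y. conv A (join A x y) = join A (conv A x) (conv A y)) \<and>
    (\<forall>x y. conv A (rcomp A x y) = rcomp A (conv A y) (conv A x)) \<and>
    (\<forall>x y. join A (rcomp A (conv A x) (cpl A (rcomp A x y))) (cpl A y) = cpl A y)"

definition is_atom :: "'a ra_sig \<Rightarrow> 'a \<Rightarrow> bool" where
  "is_atom A a \<longleftrightarrow> a \<noteq> botel A \<and> (\<forall>y. leq A y a \<longrightarrow> y = botel A \<or> y = a)"

definition atoms :: "'a ra_sig \<Rightarrow> 'a set" where
  "atoms A = {a. is_atom A a}"

definition atomic :: "'a ra_sig \<Rightarrow> bool" where
  "atomic A \<longleftrightarrow> (\<forall>x. x \<noteq> botel A \<longrightarrow> (\<exists>a. is_atom A a \<and> leq A a x))"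

definition complete :: "'a ra_sig \<Rightarrow> bool" where
  "complete A \<longleftrightarrow> (\<forall>X. \<exists>s. (\<forall>x\<in>X. leq A x s) \<and> (\<forall>u. (\<forall>x\<in>X. leq A x u) \<longrightarrow> leq A s u))"

definition sel :: "'a \<times> 'a \<times> 'a \<Rightarrow> nat \<Rightarrow> 'a" where
  "sel s k = (if k = 0 then fst s else if k = 1 then fst (snd s) else snd (snd s))"

definition SB :: "'a ra_sig \<Rightarrow> ('a \<times> 'a \<times> 'a) set" where
  "SB A = {s. (\<forall>k<3. sel s k \<in> atoms A) \<and> leq A (sel s 1) (rcomp A (sel s 2) (sel s 0))}"

definition ST :: "'a ra_sig \<Rightarrow> nat \<Rightarrow> (('a \<times> 'a \<times> 'a) \<times> ('a \<times> 'a \<times> 'a)) set" where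
  "ST A k = {(s, t). s \<in> SB A \<and> t \<in> SB A \<and> sel s k = sel t k}"

definition SE :: "'a ra_sig \<Rightarrow> nat \<Rightarrow> nat \<Rightarrow> ('a \<times> 'a \<times> 'a) set" where
  "SE A k l = (if k = l then SB A else {s \<in> SB A. leq A (sel s (3 - k - l)) (ident A)})"

definition Cyl :: "'a ra_sig \<Rightarrow> nat \<Rightarrow> ('a \<times> 'a \<times> 'a) set \<Rightarrow> ('a \<times> 'a \<times> 'a) set" where
  "Cyl A k X = {y \<in> SB A. \<exists>x\<in>X. (y, x) \<in> ST A k}"

definition CmCpl :: "'a ra_sig \<Rightarrow> ('a \<times> 'a \<times> 'a) set \<Rightarrow> ('a \<times> 'a \<times> 'a) set" where
  "CmCpl A X = SB A - X"

definition Nr2 :: "'a ra_sig \<Rightarrow> ('a \<times> 'a \<times> 'a) set set" where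
  "Nr2 A = {X. X \<subseteq> SB A \<and> Cyl A 2 X = X}"

definition RaComp :: "'a ra_sig \<Rightarrow> ('a \<times> 'a \<times> 'a) set \<Rightarrow> ('a \<times> 'a \<times> 'a) set \<Rightarrow> ('a \<times> 'a \<times> 'a) set" where
  "RaComp A X Y = Cyl A 2 (Cyl A 1 (SE A 1 2 \<inter> X) \<inter> Cyl A 0 (SE A 0 2 \<inter> Y))"

definition RaConv :: "'a ra_sig \<Rightarrow> ('a \<times> 'a \<times> 'a) set \<Rightarrow> ('a \<times> 'a \<times> 'a) set" where
  "RaConv A X = Cyl A 2 (SE A 2 0 \<inter> Cyl A 0 (SE A 0 1 \<inter> Cyl A 1 (SE A 1 2 \<inter> X)))"

definition RaIdent :: "'a ra_sig \<Rightarrow> ('a \<times> 'a \<times> 'a) set" where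
  "RaIdent A = SE A 0 1"

definition phi :: "'a ra_sig \<Rightarrow> 'a \<Rightarrow> ('a \<times> 'a \<times> 'a) set" where
  "phi A x = {t \<in> SB A. leq A (sel t 2) x}"

end

theory Submission
  imports Defs
begin

locale hunt =
  fixes j :: "'a \<Rightarrow> 'a \<Rightarrow> 'a" (infixl "\<oplus>" 65) and n :: "'a \<Rightarrow> 'a"
  assumes comm: "x \<oplus> y = y \<oplus> x"
  and assoc: "x \<oplus> (y \<oplus> z) = (x \<oplus> y) \<oplus> z"
  and H: "n (n x \<oplus> n y) \<oplus> n (n x \<oplus> y) = x"
begin
lemma L1: "x \<oplus> n x = y \<oplus> n y"
proof -
  have f1: "\<forall>a aa. n (n aa \<oplus> a) \<oplus> n (n aa \<oplus> n a) = aa"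
    by (metis (no_types) H comm)
  have f2: "\<forall>a aa ab. a \<oplus> (aa \<oplus> ab) = aa \<oplus> (a \<oplus> ab)"
    by (metis assoc comm)
  have f3: "\<forall>a aa. n (n aa \<oplus> a) \<oplus> n (n a \<oplus> n aa) = aa"
    using f1 comm by auto
  have f4: "\<forall>a aa. a \<oplus> n (n (n aa) \<oplus> n a) = a \<oplus> n (n a \<oplus> aa)"
    using f1 by (smt (verit) assoc comm)
  have f5: "\<forall>a aa. n (a \<oplus> n aa) \<oplus> n (n a \<oplus> n aa) = aa"
    using f3 comm by force
  have "\<forall>a. n a \<oplus> n (n a) = a \<oplus> n a"
    using f4 f2 f1 by (smt (verit) assoc comm)
  then have f6: "\<forall>a. n (n a) = a"
    using f1 by (metis comm)
  then have f7: "\<forall>a aa ab. n (a \<oplus> ab) \<oplus> (aa \<oplus> n (ab \<oplus> n a)) = aa \<oplus> n ab"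
    using f2 f1 by (smt (verit) comm)
  have "\<forall>a aa. aa \<oplus> n (n a \<oplus> aa) = a \<oplus> n (a \<oplus> n aa)"
    using f5 f2 f1 by (smt (verit) comm)
  then show ?thesis
    using f7 f6 f3 f2 by (metis (no_types))
qed
lemma dbl: "n (n x) = x"
  by (metis H L1 comm)
definition m (infixl "\<otimes>" 70) where "x \<otimes> y = n (n x \<oplus> n y)"
lemma mcomm: "x \<otimes> y = y \<otimes> x" by (simp add: m_def comm)
lemma massoc: "x \<otimes> (y \<otimes> z) = (x \<otimes> y) \<otimes> z" by (simp add: m_def dbl assoc)
lemma H': "x \<otimes> y \<oplus> x \<otimes> n y = x" by (metis H dbl m_def)
lemma zero: "x \<oplus> n (y \<oplus> n y) = x"
  by (smt (verit) L1 assoc dbl H comm)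
lemma idem: "x \<oplus> x = x"
proof -
  have "n (n (n x) \<oplus> n (n x)) \<oplus> n (n (n x) \<oplus> n x) = n x" by (rule H)
  hence "n (x \<oplus> x) = n x" by (metis dbl zero comm)
  thus ?thesis by (metis dbl)
qed
lemma absorb: "x \<oplus> x \<otimes> y = x"
  unfolding m_def by (metis H L1 assoc zero idem)
lemma absorb2: "x \<otimes> (x \<oplus> y) = x"
  unfolding m_def by (metis absorb m_def dbl)
lemma mcompl: "x \<otimes> n x = n (y \<oplus> n y)"
  unfolding m_def by (metis dbl L1 comm)
lemma key: "a \<otimes> (n a \<oplus> z) = a \<otimes> z"
proof -
  have "a \<otimes> (n a \<oplus> z) = a \<otimes> (n a \<oplus> z) \<otimes> z \<oplus> a \<otimes> (n a \<oplus> z) \<otimes> n z" by (rule H'[symmetric])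
  also have "a \<otimes> (n a \<oplus> z) \<otimes> z = a \<otimes> z" by (metis absorb2 comm massoc mcomm)
  also have "a \<otimes> (n a \<oplus> z) \<otimes> n z = (a \<otimes> n z) \<otimes> n (a \<otimes> n z)" by (metis dbl m_def massoc mcomm)
  finally show ?thesis by (metis mcompl zero)
qed
lemma distrib: "x \<otimes> (y \<oplus> z) = x \<otimes> y \<oplus> x \<otimes> z"
proof -
  have "x \<otimes> (y \<oplus> z) = x \<otimes> (y \<oplus> z) \<otimes> y \<oplus> x \<otimes> (y \<oplus> z) \<otimes> n y" by (rule H'[symmetric])
  also have "x \<otimes> (y \<oplus> z) \<otimes> y = x \<otimes> y" by (metis absorb2 massoc mcomm)
  also have "x \<otimes> (y \<oplus> z) \<otimes> n y = x \<otimes> (n y \<otimes> (n (n y) \<oplus> z))" by (metis dbl massoc mcomm)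
  also have "\<dots> = x \<otimes> n y \<otimes> z" by (metis key massoc)
  also have "x \<otimes> y \<oplus> x \<otimes> n y \<otimes> z = x \<otimes> y \<oplus> x \<otimes> z \<otimes> y \<oplus> x \<otimes> z \<otimes> n y"
    by (metis absorb massoc mcomm)
  also have "\<dots> = x \<otimes> y \<oplus> x \<otimes> z" by (metis H' assoc)
  finally show ?thesis .
qed
definition le (infix "\<sqsubseteq>" 50) where "x \<sqsubseteq> y \<longleftrightarrow> x \<oplus> y = y"
definition lt where "lt x y \<longleftrightarrow> x \<sqsubseteq> y \<and> x \<noteq> y"
definition one where "one = undefined \<oplus> n undefined"
definition zero where "zero = n one"
definition diff where "diff x y = x \<otimes> n y"
lemma jn: "x \<oplus> n x = one" by (metis L1 one_def)
lemma mn: "x \<otimes> n x = zero" by (metis mcompl one_def zero_def)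
lemma nj: "n (x \<oplus> y) = n x \<otimes> n y" by (simp add: m_def dbl)
lemma nm: "n (x \<otimes> y) = n x \<oplus> n y" by (simp add: m_def dbl)
lemma distrib2: "x \<oplus> y \<otimes> z = (x \<oplus> y) \<otimes> (x \<oplus> z)"
  by (metis nj nm distrib dbl)
lemma midem: "x \<otimes> x = x" by (simp add: m_def idem dbl)
lemma le_m: "x \<sqsubseteq> y \<longleftrightarrow> x \<otimes> y = x"
  by (metis le_def absorb absorb2 comm mcomm)
lemma jzero: "x \<oplus> zero = x" by (metis zero zero_def jn)
lemma jone: "x \<oplus> one = one" by (metis jn assoc idem)
sublocale ba: boolean_algebra diff n "(\<otimes>)" "(\<sqsubseteq>)" lt "(\<oplus>)" zero one
proof unfold_locales
  show "lt x y = (x \<sqsubseteq> y \<and> \<not> y \<sqsubseteq> x)" for x y by (metis lt_def le_def comm)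
  show "x \<sqsubseteq> x" for x by (simp add: le_def idem)
  show "x \<sqsubseteq> y \<Longrightarrow> y \<sqsubseteq> z \<Longrightarrow> x \<sqsubseteq> z" for x y z by (metis le_def assoc)
  show "x \<sqsubseteq> y \<Longrightarrow> y \<sqsubseteq> x \<Longrightarrow> x = y" for x y by (metis le_def comm)
  show "x \<otimes> y \<sqsubseteq> x" for x y by (metis le_m massoc mcomm midem)
  show "x \<otimes> y \<sqsubseteq> y" for x y by (metis le_m massoc midem)
  show "x \<sqsubseteq> y \<Longrightarrow> x \<sqsubseteq> z \<Longrightarrow> x \<sqsubseteq> y \<otimes> z" for x y z by (metis le_m massoc)
  show "x \<sqsubseteq> x \<oplus> y" for x y by (metis le_def assoc idem)
  show "y \<sqsubseteq> x \<oplus> y" for x y by (metis le_def assoc idem comm)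
  show "y \<sqsubseteq> x \<Longrightarrow> z \<sqsubseteq> x \<Longrightarrow> y \<oplus> z \<sqsubseteq> x" for x y z by (metis le_def assoc)
  show "zero \<sqsubseteq> x" for x by (metis le_def jzero comm)
  show "x \<sqsubseteq> one" for x by (metis le_def jone)
  show "x \<oplus> y \<otimes> z = (x \<oplus> y) \<otimes> (x \<oplus> z)" for x y z by (rule distrib2)
  show "x \<otimes> n x = zero" for x by (rule mn)
  show "x \<oplus> n x = one" for x by (rule jn)
  show "diff x y = x \<otimes> n y" for x y by (simp add: diff_def)
qed
definition atom where "atom a \<longleftrightarrow> a \<noteq> zero \<and> (\<forall>y. y \<sqsubseteq> a \<longrightarrow> y = zero \<or> y = a)"
lemma atom_le_iff: "atom a \<Longrightarrow> a \<sqsubseteq> x \<longleftrightarrow> a \<otimes> x \<noteq> zero"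
  unfolding atom_def by (metis ba.inf.absorb_iff1 ba.inf_le1 ba.inf_bot_right ba.inf_commute ba.inf_left_commute)
lemma atom_cpl: "atom a \<Longrightarrow> a \<sqsubseteq> n x \<longleftrightarrow> \<not> a \<sqsubseteq> x"
  by (metis atom_le_iff ba.inf_shunt ba.double_compl)
lemma atom_join: "atom a \<Longrightarrow> a \<sqsubseteq> x \<oplus> y \<longleftrightarrow> a \<sqsubseteq> x \<or> a \<sqsubseteq> y"
  by (metis atom_cpl ba.compl_sup ba.le_inf_iff ba.le_supI1 ba.le_supI2)
lemma atoms_eq: "atom a \<Longrightarrow> atom b \<Longrightarrow> a \<sqsubseteq> b \<Longrightarrow> a = b"
  unfolding atom_def by blast
end

locale wa = hunt j n for j :: "'a \<Rightarrow> 'a \<Rightarrow> 'a" (infixl "\<oplus>" 65) and n +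
  fixes c :: "'a \<Rightarrow> 'a \<Rightarrow> 'a" (infixl "\<odot>" 75) and cv :: "'a \<Rightarrow> 'a" and e :: 'a
  assumes radd: "(x \<oplus> y) \<odot> z = x \<odot> z \<oplus> y \<odot> z"
  and rid: "x \<odot> e = x"
  and cvcv: "cv (cv x) = x"
  and cvj: "cv (x \<oplus> y) = cv x \<oplus> cv y"
  and cvc: "cv (x \<odot> y) = cv y \<odot> cv x"
  and ax: "cv x \<odot> n (x \<odot> y) \<oplus> n y = n y"
  and atomic: "x \<noteq> zero \<Longrightarrow> \<exists>a. atom a \<and> a \<sqsubseteq> x"
begin
lemma cv_mono: "x \<sqsubseteq> y \<Longrightarrow> cv x \<sqsubseteq> cv y" by (metis le_def cvj)
lemma cv_le: "cv x \<sqsubseteq> y \<longleftrightarrow> x \<sqsubseteq> cv y" by (metis cv_mono cvcv)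
lemma cv_zero: "cv zero = zero"
  by (metis ba.bot_least ba.bot_unique cv_le)
lemma cv_zero_iff: "cv x = zero \<longleftrightarrow> x = zero" by (metis cv_zero cvcv)
lemma cv_m: "cv (x \<otimes> y) = cv x \<otimes> cv y"
proof (rule ba.order.antisym)
  show "cv (x \<otimes> y) \<sqsubseteq> cv x \<otimes> cv y" by (simp add: cv_mono)
  have "cv (cv x \<otimes> cv y) \<sqsubseteq> x \<otimes> y" by (metis ba.le_inf_iff cv_le ba.order.refl)
  thus "cv x \<otimes> cv y \<sqsubseteq> cv (x \<otimes> y)" by (metis cv_le)
qed
lemma r_mono1: "x \<sqsubseteq> y \<Longrightarrow> x \<odot> z \<sqsubseteq> y \<odot> z" by (metis le_def radd)
lemma radd2: "z \<odot> (x \<oplus> y) = z \<odot> x \<oplus> z \<odot> y" by (metis cvcv cvj cvc radd)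
lemma r_mono2: "x \<sqsubseteq> y \<Longrightarrow> z \<odot> x \<sqsubseteq> z \<odot> y" by (metis le_def radd2)
lemma lid: "e \<odot> x = x" by (metis cvcv cvc rid)
lemma cv_e: "cv e = e" by (metis cvcv lid rid cvc)
lemma conj1: "(x \<odot> y) \<otimes> z = zero \<Longrightarrow> (cv x \<odot> z) \<otimes> y = zero"
proof -
  assume "(x \<odot> y) \<otimes> z = zero"
  hence "z \<sqsubseteq> n (x \<odot> y)" by (metis ba.inf_shunt ba.inf_commute)
  hence "cv x \<odot> z \<sqsubseteq> cv x \<odot> n (x \<odot> y)" by (rule r_mono2)
  also have "\<dots> \<sqsubseteq> n y" using ax le_def by metis
  finally show ?thesis by (metis ba.inf_shunt)
qed
lemma conj: "(x \<odot> y) \<otimes> z = zero \<longleftrightarrow> (cv x \<odot> z) \<otimes> y = zero"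
  by (metis conj1 cvcv)
lemma conj2: "(x \<odot> y) \<otimes> z = zero \<longleftrightarrow> (y \<odot> cv z) \<otimes> cv x = zero"
  by (metis conj cvcv cv_zero_iff cv_m cvc)
lemma cv_atom: "atom a \<Longrightarrow> atom (cv a)"
  unfolding atom_def by (metis cv_le cv_zero_iff cvcv)
lemma atom_nz: "atom a \<Longrightarrow> a \<noteq> zero" by (simp add: atom_def)
lemma F1: "atom b \<Longrightarrow> \<exists>ea. atom ea \<and> ea \<sqsubseteq> e \<and> b \<sqsubseteq> b \<odot> ea"
proof (rule ccontr)
  assume b: "atom b" and "\<not> (\<exists>ea. atom ea \<and> ea \<sqsubseteq> e \<and> b \<sqsubseteq> b \<odot> ea)"
  hence h: "\<And>ea. atom ea \<Longrightarrow> ea \<sqsubseteq> e \<Longrightarrow> (cv b \<odot> b) \<otimes> ea = zero"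
    by (metis atom_le_iff ba.inf_commute conj cvcv)
  have "(cv b \<odot> b) \<otimes> e = zero"
  proof (rule ccontr)
    assume "(cv b \<odot> b) \<otimes> e \<noteq> zero"
    then obtain ea where "atom ea" "ea \<sqsubseteq> (cv b \<odot> b) \<otimes> e" using atomic by blast
    thus False using h[of ea] by (metis atom_le_iff ba.le_inf_iff ba.inf.absorb_iff2 ba.inf_commute)
  qed
  hence "(b \<odot> e) \<otimes> b = zero" by (metis conj cvcv)
  thus False using b by (simp add: rid midem atom_nz)
qed
lemma F1': "atom b \<Longrightarrow> \<exists>ea. atom ea \<and> ea \<sqsubseteq> e \<and> b \<sqsubseteq> ea \<odot> b"
proof -
  assume "atom b"
  then obtain ea where "atom ea" "ea \<sqsubseteq> e" "cv b \<sqsubseteq> cv b \<odot> ea" using F1 cv_atom by blast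
  thus ?thesis by (metis cv_atom cv_e cv_mono cvc cvcv)
qed
lemma F2: "atom a \<Longrightarrow> atom b \<Longrightarrow> ea \<sqsubseteq> e \<Longrightarrow> b \<sqsubseteq> a \<odot> ea \<Longrightarrow> b = a"
  by (metis atoms_eq r_mono2 rid ba.order.trans)
lemma F2': "atom a \<Longrightarrow> atom b \<Longrightarrow> ea \<sqsubseteq> e \<Longrightarrow> b \<sqsubseteq> ea \<odot> a \<Longrightarrow> b = a"
  by (metis atoms_eq r_mono1 lid ba.order.trans)
lemma F3: "atom a \<Longrightarrow> atom b \<Longrightarrow> atom ea \<Longrightarrow> ea \<sqsubseteq> e \<Longrightarrow> ea \<sqsubseteq> a \<odot> b \<Longrightarrow> b = cv a"
proof -
  assume a: "atom a" and b: "atom b" and ea: "atom ea" "ea \<sqsubseteq> e" "ea \<sqsubseteq> a \<odot> b"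
  hence "(a \<odot> b) \<otimes> ea \<noteq> zero" by (metis atom_le_iff ba.inf_commute)
  hence "(cv a \<odot> ea) \<otimes> b \<noteq> zero" by (metis conj)
  hence "b \<sqsubseteq> cv a \<odot> ea" using b by (metis atom_le_iff ba.inf_commute)
  thus "b = cv a" using F2 a b ea cv_atom by blast
qed
lemma F3': "atom b \<Longrightarrow> \<exists>ea. atom ea \<and> ea \<sqsubseteq> e \<and> ea \<sqsubseteq> cv b \<odot> b"
proof -
  assume b: "atom b"
  then obtain ea where ea: "atom ea" "ea \<sqsubseteq> e" "b \<sqsubseteq> b \<odot> ea" using F1 by blast
  hence "(b \<odot> ea) \<otimes> b \<noteq> zero" using b by (metis atom_le_iff ba.inf_commute)
  hence "(cv b \<odot> b) \<otimes> ea \<noteq> zero" by (metis conj cvcv)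
  thus ?thesis using ea by (metis atom_le_iff ba.inf_commute)
qed
lemma F4: "atom a \<Longrightarrow> atom b \<Longrightarrow> atom g \<Longrightarrow> g \<sqsubseteq> a \<odot> b \<longleftrightarrow> a \<sqsubseteq> g \<odot> cv b"
proof -
  assume a: "atom a" and b: "atom b" and gg: "atom g"
  have "(g \<odot> cv b) \<otimes> a = zero \<longleftrightarrow> (a \<odot> b) \<otimes> g = zero"
    by (metis conj2 cvcv cv_zero_iff cv_m cvc ba.inf_commute)
  thus ?thesis using a gg by (metis atom_le_iff ba.inf_commute)
qed
lemma F5: "atom g \<Longrightarrow> g \<sqsubseteq> x \<odot> y \<longleftrightarrow> (\<exists>a b. atom a \<and> atom b \<and> a \<sqsubseteq> x \<and> b \<sqsubseteq> y \<and> g \<sqsubseteq> a \<odot> b)"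
proof
  assume "\<exists>a b. atom a \<and> atom b \<and> a \<sqsubseteq> x \<and> b \<sqsubseteq> y \<and> g \<sqsubseteq> a \<odot> b"
  thus "g \<sqsubseteq> x \<odot> y" by (meson r_mono1 r_mono2 ba.order.trans)
next
  assume gg: "atom g" and "g \<sqsubseteq> x \<odot> y"
  hence "(x \<odot> y) \<otimes> g \<noteq> zero" by (metis atom_le_iff ba.inf_commute)
  hence "(cv x \<odot> g) \<otimes> y \<noteq> zero" by (metis conj)
  then obtain b where b: "atom b" "b \<sqsubseteq> (cv x \<odot> g) \<otimes> y" using atomic by blast
  hence "(cv x \<odot> g) \<otimes> b \<noteq> zero" by (metis atom_le_iff ba.le_inf_iff ba.inf_commute)
  hence "(x \<odot> b) \<otimes> g \<noteq> zero" by (metis conj)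
  hence "(b \<odot> cv g) \<otimes> cv x \<noteq> zero" by (metis conj2)
  then obtain a' where a': "atom a'" "a' \<sqsubseteq> (b \<odot> cv g) \<otimes> cv x" using atomic by blast
  hence "(b \<odot> cv g) \<otimes> cv (cv a') \<noteq> zero" by (metis atom_le_iff ba.le_inf_iff ba.inf_commute cvcv)
  hence "(cv a' \<odot> b) \<otimes> g \<noteq> zero" by (metis conj2)
  hence "g \<sqsubseteq> cv a' \<odot> b" using gg by (metis atom_le_iff ba.inf_commute)
  moreover have "cv a' \<sqsubseteq> x" using a' by (metis cv_le ba.le_inf_iff)
  ultimately show "\<exists>a b. atom a \<and> atom b \<and> a \<sqsubseteq> x \<and> b \<sqsubseteq> y \<and> g \<sqsubseteq> a \<odot> b"
    using a' b cv_atom by (meson ba.le_inf_iff)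
qed
end


locale wasig = wa +
  fixes A :: "'a ra_sig"
  assumes jA: "join A = j" and nA: "cpl A = n" and cA: "rcomp A = c" and cvA: "conv A = cv" and eA: "ident A = e"
begin
lemma leqA: "leq A x y \<longleftrightarrow> x \<sqsubseteq> y" by (simp add: leq_def le_def jA)
lemma all3: "(\<forall>k<(3::nat). P k) \<longleftrightarrow> P 0 \<and> P 1 \<and> P 2"
  by (auto simp: numeral_3_eq_3 less_Suc_eq numeral_2_eq_2)
lemma sel0: "sel s 0 = fst s" and sel1: "sel s 1 = fst (snd s)" and sel2: "sel s 2 = snd (snd s)"
  and sel1': "sel s (Suc 0) = fst (snd s)"
  by (simp_all add: sel_def)
lemma botA: "botel A = zero"
  by (simp add: botel_def topel_def diversity_def jA nA eA)
lemma atomA: "is_atom A a \<longleftrightarrow> atom a"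
  by (simp add: is_atom_def atom_def botA leqA)
lemma SB_mem: "(p, q, r) \<in> SB A \<longleftrightarrow> atom p \<and> atom q \<and> atom r \<and> q \<sqsubseteq> r \<odot> p"
  by (simp add: SB_def all3 sel0 sel1 sel1' sel2 atoms_def atomA leqA cA)
lemma SB_mem': "s \<in> SB A \<longleftrightarrow> atom (fst s) \<and> atom (fst (snd s)) \<and> atom (snd (snd s)) \<and> fst (snd s) \<sqsubseteq> snd (snd s) \<odot> fst s"
  by (cases s) (simp add: SB_mem)
lemma phi_mem: "s \<in> phi A x \<longleftrightarrow> s \<in> SB A \<and> snd (snd s) \<sqsubseteq> x"
  by (simp add: phi_def sel2 leqA)
lemma SE12: "SE A (Suc 0) 2 = {s \<in> SB A. fst s \<sqsubseteq> e}" by (simp add: SE_def sel0 leqA eA)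
lemma SE02: "SE A 0 2 = {s \<in> SB A. fst (snd s) \<sqsubseteq> e}" by (simp add: SE_def sel1 sel1' leqA eA)
lemma SE20: "SE A 2 0 = {s \<in> SB A. fst (snd s) \<sqsubseteq> e}" by (simp add: SE_def sel1 sel1' leqA eA)
lemma SE01: "SE A 0 (Suc 0) = {s \<in> SB A. snd (snd s) \<sqsubseteq> e}" by (simp add: SE_def sel2 leqA eA)
lemma Cyl_mem: "y \<in> Cyl A k X \<longleftrightarrow> y \<in> SB A \<and> (\<exists>x\<in>X. x \<in> SB A \<and> sel y k = sel x k)"
  by (auto simp: Cyl_def ST_def)
lemma Cyl_intro: "s \<in> SB A \<Longrightarrow> w \<in> X \<Longrightarrow> w \<in> SB A \<Longrightarrow> sel s k = sel w k \<Longrightarrow> s \<in> Cyl A k X"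
  by (auto simp: Cyl_mem)
lemma LC1: "Cyl A (Suc 0) (SE A (Suc 0) 2 \<inter> phi A x) = {s \<in> SB A. fst (snd s) \<sqsubseteq> x}"
proof (intro set_eqI iffI)
  fix s assume "s \<in> Cyl A (Suc 0) (SE A (Suc 0) 2 \<inter> phi A x)"
  then obtain t where s: "s \<in> SB A" and t: "t \<in> SB A" "fst t \<sqsubseteq> e" "snd (snd t) \<sqsubseteq> x"
    "fst (snd s) = fst (snd t)"
    by (auto simp: Cyl_mem SE12 phi_mem sel1 sel1')
  have "fst (snd t) = snd (snd t)" using t F2 by (simp add: SB_mem')
  thus "s \<in> {s \<in> SB A. fst (snd s) \<sqsubseteq> x}" using s t by simp
next
  fix s assume "s \<in> {s \<in> SB A. fst (snd s) \<sqsubseteq> x}"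
  then obtain p q r where s: "s = (p, q, r)" "(p, q, r) \<in> SB A" "q \<sqsubseteq> x" by (cases s) auto
  hence "atom q" by (simp add: SB_mem)
  then obtain ea where ea: "atom ea" "ea \<sqsubseteq> e" "q \<sqsubseteq> q \<odot> ea" using F1 by blast
  have w: "(ea, q, q) \<in> SE A (Suc 0) 2 \<inter> phi A x" using ea s \<open>atom q\<close> by (simp add: SE12 phi_mem SB_mem)
  show "s \<in> Cyl A (Suc 0) (SE A (Suc 0) 2 \<inter> phi A x)"
    by (rule Cyl_intro[OF _ w]) (use s w in \<open>simp_all add: sel0 sel1 sel1' sel2 SE12 SE02 SE01 SE20 phi_mem\<close>)
qed
lemma LC0: "Cyl A 0 (SE A 0 2 \<inter> phi A y) = {s \<in> SB A. cv (fst s) \<sqsubseteq> y}"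
proof (intro set_eqI iffI)
  fix s assume "s \<in> Cyl A 0 (SE A 0 2 \<inter> phi A y)"
  then obtain t where tX: "t \<in> SE A 0 2 \<inter> phi A y" and s: "s \<in> SB A" and eq: "sel s 0 = sel t 0"
    unfolding Cyl_mem by blast
  from tX have t: "t \<in> SB A" "fst (snd t) \<sqsubseteq> e" "snd (snd t) \<sqsubseteq> y" by (simp_all add: SE02 phi_mem)
  have tt: "atom (fst t)" "atom (fst (snd t))" "atom (snd (snd t))" "fst (snd t) \<sqsubseteq> snd (snd t) \<odot> fst t"
    using t(1) by (simp_all add: SB_mem')
  have "fst t = cv (snd (snd t))" by (rule F3[OF tt(3) tt(1) tt(2) t(2) tt(4)])
  hence "cv (fst s) \<sqsubseteq> y" using eq t(3) by (simp add: sel0 cvcv)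
  thus "s \<in> {s \<in> SB A. cv (fst s) \<sqsubseteq> y}" using s by simp
next
  fix s assume "s \<in> {s \<in> SB A. cv (fst s) \<sqsubseteq> y}"
  then obtain p q r where s: "s = (p, q, r)" "(p, q, r) \<in> SB A" "cv p \<sqsubseteq> y" by (cases s) auto
  hence "atom p" by (simp add: SB_mem)
  then obtain ea where ea: "atom ea" "ea \<sqsubseteq> e" "ea \<sqsubseteq> cv p \<odot> p" using F3' by blast
  have w: "(p, ea, cv p) \<in> SE A 0 2 \<inter> phi A y" using ea s \<open>atom p\<close> cv_atom by (simp add: SE02 phi_mem SB_mem)
  show "s \<in> Cyl A 0 (SE A 0 2 \<inter> phi A y)"
    by (rule Cyl_intro[OF _ w]) (use s w in \<open>simp_all add: sel0 SE02\<close>)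
qed
lemma RaComp_eq: "RaComp A (phi A x) (phi A y) = Cyl A 2 ({s \<in> SB A. fst (snd s) \<sqsubseteq> x} \<inter> {s \<in> SB A. cv (fst s) \<sqsubseteq> y})"
  by (simp add: RaComp_def LC1 LC0)
lemma comp: "RaComp A (phi A x) (phi A y) = phi A (x \<odot> y)"
proof (intro set_eqI iffI)
  fix s assume "s \<in> RaComp A (phi A x) (phi A y)"
  then obtain t where s: "s \<in> SB A" and t: "t \<in> SB A" "fst (snd t) \<sqsubseteq> x" "cv (fst t) \<sqsubseteq> y"
    "snd (snd s) = snd (snd t)"
    by (auto simp: RaComp_eq Cyl_mem sel2)
  have "snd (snd t) \<sqsubseteq> fst (snd t) \<odot> cv (fst t)" using t F4[of "snd (snd t)" "fst t" "fst (snd t)"] by (simp add: SB_mem')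
  also have "\<dots> \<sqsubseteq> x \<odot> y" using t by (meson r_mono1 r_mono2 ba.order.trans)
  finally show "s \<in> phi A (x \<odot> y)" using s t by (simp add: phi_mem)
next
  fix s assume "s \<in> phi A (x \<odot> y)"
  then obtain p q r where s: "s = (p, q, r)" "(p, q, r) \<in> SB A" "r \<sqsubseteq> x \<odot> y" by (cases s) (auto simp: phi_mem)
  hence "atom r" by (simp add: SB_mem)
  then obtain a b where ab: "atom a" "atom b" "a \<sqsubseteq> x" "b \<sqsubseteq> y" "r \<sqsubseteq> a \<odot> b" using F5 s by blast
  have "a \<sqsubseteq> r \<odot> cv b" using F4 ab \<open>atom r\<close> by blast
  hence w: "(cv b, a, r) \<in> {s \<in> SB A. fst (snd s) \<sqsubseteq> x} \<inter> {s \<in> SB A. cv (fst s) \<sqsubseteq> y}"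
    using ab \<open>atom r\<close> cv_atom by (simp add: SB_mem cvcv)
  show "s \<in> RaComp A (phi A x) (phi A y)"
    unfolding RaComp_eq by (rule Cyl_intro[OF _ w]) (use s w in \<open>simp_all add: sel0 sel1 sel1' sel2\<close>)
qed
lemma LC0': "Cyl A 0 (SE A 0 (Suc 0) \<inter> {s \<in> SB A. fst (snd s) \<sqsubseteq> x}) = {s \<in> SB A. fst s \<sqsubseteq> x}"
proof (intro set_eqI iffI)
  fix s assume "s \<in> Cyl A 0 (SE A 0 (Suc 0) \<inter> {s \<in> SB A. fst (snd s) \<sqsubseteq> x})"
  then obtain t where s: "s \<in> SB A" and t: "t \<in> SB A" "snd (snd t) \<sqsubseteq> e" "fst (snd t) \<sqsubseteq> x"
    "fst s = fst t"
    by (auto simp: Cyl_mem SE01 sel0)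
  have "fst (snd t) = fst t" using t F2' by (simp add: SB_mem')
  thus "s \<in> {s \<in> SB A. fst s \<sqsubseteq> x}" using s t by simp
next
  fix s assume "s \<in> {s \<in> SB A. fst s \<sqsubseteq> x}"
  then obtain p q r where s: "s = (p, q, r)" "(p, q, r) \<in> SB A" "p \<sqsubseteq> x" by (cases s) auto
  hence "atom p" by (simp add: SB_mem)
  then obtain ea where ea: "atom ea" "ea \<sqsubseteq> e" "p \<sqsubseteq> ea \<odot> p" using F1' by blast
  have w: "(p, p, ea) \<in> SE A 0 (Suc 0) \<inter> {s \<in> SB A. fst (snd s) \<sqsubseteq> x}" using ea s \<open>atom p\<close> by (simp add: SE01 SB_mem)
  show "s \<in> Cyl A 0 (SE A 0 (Suc 0) \<inter> {s \<in> SB A. fst (snd s) \<sqsubseteq> x})"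
    by (rule Cyl_intro[OF _ w]) (use s w in \<open>simp_all add: sel0 sel1 sel1' sel2 SE12 SE02 SE01 SE20 phi_mem\<close>)
qed
lemma RaConv_eq: "RaConv A (phi A x) = Cyl A 2 (SE A 2 0 \<inter> {s \<in> SB A. fst s \<sqsubseteq> x})"
  by (simp add: RaConv_def LC1 LC0')
lemma conv: "RaConv A (phi A x) = phi A (cv x)"
proof (intro set_eqI iffI)
  fix s assume "s \<in> RaConv A (phi A x)"
  then obtain t where s: "s \<in> SB A" and t: "t \<in> SB A" "fst (snd t) \<sqsubseteq> e" "fst t \<sqsubseteq> x"
    "snd (snd s) = snd (snd t)"
    by (auto simp: RaConv_eq Cyl_mem sel2 SE20)
  have "fst t = cv (snd (snd t))" using t F3[of "snd (snd t)" "fst t" "fst (snd t)"] by (simp add: SB_mem')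
  thus "s \<in> phi A (cv x)" using s t by (simp add: phi_mem cv_le)
next
  fix s assume "s \<in> phi A (cv x)"
  then obtain p q r where s: "s = (p, q, r)" "(p, q, r) \<in> SB A" "r \<sqsubseteq> cv x" by (cases s) (auto simp: phi_mem)
  hence "atom r" by (simp add: SB_mem)
  then obtain ea where ea: "atom ea" "ea \<sqsubseteq> e" "ea \<sqsubseteq> cv (cv r) \<odot> cv r" using F3' cv_atom by blast
  have w: "(cv r, ea, r) \<in> SE A 2 0 \<inter> {s \<in> SB A. fst s \<sqsubseteq> x}"
    using ea s \<open>atom r\<close> cv_atom by (simp add: SE20 SB_mem cvcv cv_le)
  show "s \<in> RaConv A (phi A x)"
    unfolding RaConv_eq by (rule Cyl_intro[OF _ w]) (use s w in \<open>simp_all add: sel0 sel1 sel1' sel2 SE20\<close>)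
qed
lemma phi_SB: "phi A x \<subseteq> SB A" by (auto simp: phi_mem)
lemma phi_join: "phi A (x \<oplus> y) = phi A x \<union> phi A y"
  by (auto simp: phi_mem SB_mem' atom_join)
lemma phi_cpl: "phi A (n x) = CmCpl A (phi A x)"
  by (auto simp: phi_mem SB_mem' atom_cpl CmCpl_def)
lemma phi_ident: "phi A e = RaIdent A"
  by (auto simp: phi_mem RaIdent_def SE01)
lemma phi_Nr2: "phi A x \<in> Nr2 A"
proof -
  have "Cyl A 2 (phi A x) = phi A x"
  proof (intro set_eqI iffI)
    fix s assume "s \<in> Cyl A 2 (phi A x)"
    then obtain t where "t \<in> phi A x" "s \<in> SB A" "sel s 2 = sel t 2" unfolding Cyl_mem by blast
    thus "s \<in> phi A x" by (simp add: phi_mem sel2)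
  next
    fix s assume "s \<in> phi A x"
    thus "s \<in> Cyl A 2 (phi A x)" by (intro Cyl_intro[of s s]) (simp_all add: phi_mem)
  qed
  thus ?thesis using phi_SB by (simp add: Nr2_def)
qed
lemma exB: "atom a \<Longrightarrow> \<exists>t \<in> SB A. snd (snd t) = a"
proof -
  assume a: "atom a"
  then obtain ea where "atom ea" "ea \<sqsubseteq> e" "a \<sqsubseteq> a \<odot> ea" using F1 by blast
  hence "(ea, a, a) \<in> SB A" using a by (simp add: SB_mem)
  thus ?thesis by force
qed
lemma phi_sep: "\<not> x \<sqsubseteq> y \<Longrightarrow> phi A x \<noteq> phi A y"
proof -
  assume "\<not> x \<sqsubseteq> y"
  hence "x \<otimes> n y \<noteq> zero" by (metis ba.inf_shunt ba.double_compl)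
  then obtain a where a: "atom a" "a \<sqsubseteq> x \<otimes> n y" using atomic by blast
  hence ax: "a \<sqsubseteq> x" and ay: "\<not> a \<sqsubseteq> y" using atom_cpl by (auto simp: ba.le_inf_iff)
  obtain t where t: "t \<in> SB A" "snd (snd t) = a" using exB a by blast
  have "t \<in> phi A x" "t \<notin> phi A y" using t ax ay by (auto simp: phi_mem)
  thus ?thesis by blast
qed
lemma phi_inj: "inj (phi A)"
proof (rule injI)
  fix x y assume "phi A x = phi A y"
  hence "x \<sqsubseteq> y" "y \<sqsubseteq> x" using phi_sep by metis+
  thus "x = y" by (rule ba.order.antisym)
qed
lemma phi_surj:
  assumes cmp: "complete A" and X: "X \<in> Nr2 A"
  shows "X \<in> range (phi A)"
proof -
  have XBC: "X \<subseteq> SB A \<and> Cyl A 2 X = X" using X unfolding Nr2_def by (rule CollectD)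
  have XB: "X \<subseteq> SB A" using XBC by (rule conjunct1)
  have XC: "Cyl A 2 X = X" using XBC by (rule conjunct2)
  let ?S = "(\<lambda>t. snd (snd t)) ` X"
  have ex: "\<exists>u. (\<forall>x\<in>?S. leq A x u) \<and> (\<forall>v. (\<forall>x\<in>?S. leq A x v) \<longrightarrow> leq A u v)"
    using cmp[unfolded complete_def, THEN spec, of ?S] .
  obtain u where "(\<forall>x\<in>?S. leq A x u) \<and> (\<forall>v. (\<forall>x\<in>?S. leq A x v) \<longrightarrow> leq A u v)"
    using ex by (rule exE)
  hence ul: "(\<forall>x\<in>?S. x \<sqsubseteq> u) \<and> (\<forall>v. (\<forall>x\<in>?S. x \<sqsubseteq> v) \<longrightarrow> u \<sqsubseteq> v)"
    by (simp only: leqA)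
  have ub: "\<forall>x\<in>?S. x \<sqsubseteq> u" using ul by (rule conjunct1)
  have lub: "\<forall>v. (\<forall>x\<in>?S. x \<sqsubseteq> v) \<longrightarrow> u \<sqsubseteq> v" using ul by (rule conjunct2)
  have "phi A u = X"
  proof (intro set_eqI iffI)
    fix t assume t: "t \<in> phi A u"
    hence tB: "t \<in> SB A" and tu: "snd (snd t) \<sqsubseteq> u" by (auto simp: phi_mem)
    hence at: "atom (snd (snd t))" by (simp add: SB_mem')
    have "\<exists>t'\<in>X. snd (snd t') = snd (snd t)"
    proof (rule ccontr)
      assume nx: "\<not> ?thesis"
      have "\<forall>x\<in>?S. x \<sqsubseteq> n (snd (snd t))"
      proof
        fix x assume "x \<in> ?S"
        then obtain t' where t': "t' \<in> X" "x = snd (snd t')" by blast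
        hence "atom x" using XB by (auto simp: SB_mem')
        moreover have "x \<noteq> snd (snd t)" using nx t' by auto
        ultimately have "\<not> x \<sqsubseteq> snd (snd t)" using atoms_eq at by blast
        thus "x \<sqsubseteq> n (snd (snd t))" using atom_cpl \<open>atom x\<close> by blast
      qed
      hence "u \<sqsubseteq> n (snd (snd t))" using lub by blast
      hence "snd (snd t) \<sqsubseteq> n (snd (snd t))" using tu ba.order.trans by blast
      thus False using atom_cpl[OF at, of "snd (snd t)"] by simp
    qed
    then obtain t' where "t' \<in> X" "snd (snd t') = snd (snd t)" by blast
    hence "t \<in> Cyl A 2 X" using tB XB by (intro Cyl_intro[of t t']) (auto simp: sel2)
    thus "t \<in> X" using XC by simp
  next
    fix t assume tX: "t \<in> X"
    hence "snd (snd t) \<in> ?S" by blast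
    hence "snd (snd t) \<sqsubseteq> u" using ub by blast
    moreover have "t \<in> SB A" using XB tX by (rule subsetD)
    ultimately show "t \<in> phi A u" by (simp add: phi_mem)
  qed
  thus ?thesis by blast
qed
end

theorem theorem5:
  fixes A :: "'a ra_sig"
  assumes "WA A" and "complete A" and "atomic A"
  shows "bij_betw (phi A) UNIV (Nr2 A) \<and>
    (\<forall>x y. phi A (join A x y) = phi A x \<union> phi A y) \<and>
    (\<forall>x. phi A (cpl A x) = CmCpl A (phi A x)) \<and>
    (\<forall>x y. phi A (rcomp A x y) = RaComp A (phi A x) (phi A y)) \<and>
    (\<forall>x. phi A (conv A x) = RaConv A (phi A x)) \<and>
    phi A (ident A) = RaIdent A"
proof -
  have W: "WA A" by fact
  interpret hunt "join A" "cpl A"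
  proof
    show "join A x y = join A y x" for x y using W unfolding WA_def by blast
    show "join A x (join A y z) = join A (join A x y) z" for x y z using W unfolding WA_def by blast
    show "join A (cpl A (join A (cpl A x) (cpl A y))) (cpl A (join A (cpl A x) y)) = x" for x y
      using W unfolding WA_def by blast
  qed
  have botA: "botel A = hunt.zero (join A) (cpl A)"
    by (simp only: botel_def topel_def diversity_def jn zero_def)
  have atA: "is_atom A a \<longleftrightarrow> hunt.atom (join A) (cpl A) a" for a
    by (simp only: is_atom_def atom_def leq_def le_def botA)
  have at: "\<exists>a. hunt.atom (join A) (cpl A) a \<and> hunt.le (join A) a x"
    if "x \<noteq> hunt.zero (join A) (cpl A)" for x
    using assms(3) that unfolding atomic_def botA atA leq_def le_def by blast
  interpret wasig "join A" "cpl A" "rcomp A" "conv A" "ident A" A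
  proof unfold_locales
    show "rcomp A (join A x y) z = join A (rcomp A x z) (rcomp A y z)" for x y z using W unfolding WA_def by blast
    show "rcomp A x (ident A) = x" for x using W unfolding WA_def by blast
    show "conv A (conv A x) = x" for x using W unfolding WA_def by blast
    show "conv A (join A x y) = join A (conv A x) (conv A y)" for x y using W unfolding WA_def by blast
    show "conv A (rcomp A x y) = rcomp A (conv A y) (conv A x)" for x y using W unfolding WA_def by blast
    show "join A (rcomp A (conv A x) (cpl A (rcomp A x y))) (cpl A y) = cpl A y" for x y
      using W unfolding WA_def by blast
    show "x \<noteq> hunt.zero (join A) (cpl A) \<Longrightarrow> \<exists>a. hunt.atom (join A) (cpl A) a \<and> hunt.le (join A) a x" for x
      by (rule at)
  qed (rule refl)+
  show ?thesis
  proof (intro conjI allI)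
    have "phi A ` UNIV = Nr2 A" using phi_Nr2 phi_surj[OF assms(2)] by blast
    thus "bij_betw (phi A) UNIV (Nr2 A)" unfolding bij_betw_def using phi_inj by blast
    show "phi A (join A x y) = phi A x \<union> phi A y" for x y by (rule phi_join)
    show "phi A (cpl A x) = CmCpl A (phi A x)" for x by (rule phi_cpl)
    show "phi A (rcomp A x y) = RaComp A (phi A x) (phi A y)" for x y by (rule comp[symmetric])
    show "phi A (conv A x) = RaConv A (phi A x)" for x by (rule conv[symmetric])
    show "phi A (ident A) = RaIdent A" by (rule phi_ident)
  qed
qed

end
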